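(* Let $X$ be a CAT(0) space, $T_n:X\to X$ for $n\in\mathbb{N}$, and $(\gamma_n)$ a sequence of positive reals. If $(T_n)$ is jointly firmly nonexpansive with respect to $(\gamma_n)$, then $(T_n)$ is jointly $(P_2)$ with respect to $(\gamma_n)$.
   Context: A geodesic space $(X,d)$ is CAT(0) if for all $z\in X$, all geodesics $\gamma:[a,b]\to X$ and all $t\in[0,1]$, $d^2(z,\gamma((1-t)a+tb))\le(1-t)d^2(z,\gamma(a))+td^2(z,\gamma(b))-t(1-t)d^2(\gamma(a),\gamma(b))$. CAT(0) spaces are uniquely geodesic; for $x,y\in X$ and $t\in[0,1]$, $(1-t)x+ty$ denotes the point at distance $t\,d(x,y)$ from $x$ on the geodesic from $x$ to $y$. The family $(T_n)$ is jointly firmly nonexpansive with respect to $(\gamma_n)$ if for all $n,m\in\mathbb{N}$, $x,y\in X$ and $\alpha,\beta\in[0,1]$ with $(1-\alpha)\gamma_n=(1-\beta)\gamma_m$, one has $d(T_nx,T_my)\le d((1-\alpha)x+\alpha T_nx,(1-\beta)y+\beta T_my)$. It is jointly $(P_2)$ with respect to $(\gamma_n)$ if for all $n,m\in\mathbb{N}$ and $x,y\in X$, $\frac1{\gamma_m}\big(d^2(T_nx,T_my)+d^2(y,T_my)-d^2(y,T_nx)\big)\le\frac1{\gamma_n}\big(d^2(x,T_my)-d^2(x,T_nx)-d^2(T_nx,T_my)\big)$. *)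

theory Defs
  imports "HOL-Analysis.Analysis"
begin

definition geodesic :: "(real \<Rightarrow> 'a::metric_space) \<Rightarrow> real \<Rightarrow> real \<Rightarrow> bool" where
  "geodesic g a b \<longleftrightarrow> a \<le> b \<and> (\<forall>s\<in>{a..b}. \<forall>t\<in>{a..b}. dist (g s) (g t) = \<bar>s - t\<bar>)"

definition geodesic_space :: "'a::metric_space itself \<Rightarrow> bool" where
  "geodesic_space TYPE('a) \<longleftrightarrow>
     (\<forall>x y::'a. \<exists>g a b. geodesic g a b \<and> g a = x \<and> g b = y)"

definition CAT0 :: "'a::metric_space itself \<Rightarrow> bool" where
  "CAT0 TYPE('a) \<longleftrightarrow> geodesic_space TYPE('a) \<and>
     (\<forall>(z::'a) g a b t. geodesic g a b \<and> t \<in> {0..1} \<longrightarrow>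
        (dist z (g ((1 - t) * a + t * b)))\<^sup>2
          \<le> (1 - t) * (dist z (g a))\<^sup>2 + t * (dist z (g b))\<^sup>2
             - t * (1 - t) * (dist (g a) (g b))\<^sup>2)"

text \<open>geo_comb t x y is (1-t)x + ty: the point at parameter t on the geodesic from x to y
  (well defined in a uniquely geodesic space such as a CAT(0) space).\<close>
definition geo_comb :: "real \<Rightarrow> 'a::metric_space \<Rightarrow> 'a \<Rightarrow> 'a" where
  "geo_comb t x y = (THE p. \<exists>g a b. geodesic g a b \<and> g a = x \<and> g b = y \<and> p = g ((1 - t) * a + t * b))"

definition jointly_firmly_nonexpansive ::
  "(nat \<Rightarrow> 'a::metric_space \<Rightarrow> 'a) \<Rightarrow> (nat \<Rightarrow> real) \<Rightarrow> bool" where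
  "jointly_firmly_nonexpansive T gam \<longleftrightarrow>
     (\<forall>n m x y \<alpha> \<beta>. \<alpha> \<in> {0..1} \<and> \<beta> \<in> {0..1} \<and> (1 - \<alpha>) * gam n = (1 - \<beta>) * gam m \<longrightarrow>
        dist (T n x) (T m y) \<le> dist (geo_comb \<alpha> x (T n x)) (geo_comb \<beta> y (T m y)))"

definition jointly_P2 :: "(nat \<Rightarrow> 'a::metric_space \<Rightarrow> 'a) \<Rightarrow> (nat \<Rightarrow> real) \<Rightarrow> bool" where
  "jointly_P2 T gam \<longleftrightarrow>
     (\<forall>n m x y.
        (1 / gam m) * ((dist (T n x) (T m y))\<^sup>2 + (dist y (T m y))\<^sup>2 - (dist y (T n x))\<^sup>2)
        \<le> (1 / gam n) * ((dist x (T m y))\<^sup>2 - (dist x (T n x))\<^sup>2 - (dist (T n x) (T m y))\<^sup>2))"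

end

theory Submission
  imports Defs
begin

lemma geod_facts:
  assumes g: "geodesic g a b" and t: "t \<in> {0..1::real}"
  shows "dist (g a) (g ((1-t)*a+t*b)) = t*(b-a)"
    and "dist (g ((1-t)*a+t*b)) (g b) = (1-t)*(b-a)"
    and "dist (g a) (g b) = b - a"
proof -
  have ab: "a \<le> b" and d: "\<And>s u. s\<in>{a..b} \<Longrightarrow> u\<in>{a..b} \<Longrightarrow> dist (g s) (g u) = \<bar>s - u\<bar>"
    using g unfolding geodesic_def by auto
  have s: "(1-t)*a+t*b \<in> {a..b}"
  proof -
    have "(1-t)*a+t*b = a + t*(b-a)" by algebra
    moreover have "0 \<le> t*(b-a)" "t*(b-a) \<le> b - a" using t ab by (auto intro: mult_left_le_one_le)
    ultimately show ?thesis by auto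
  qed
  have A: "a \<in> {a..b}" "b \<in> {a..b}" using ab by auto
  have e1: "a - ((1-t)*a+t*b) = - (t*(b-a))" by algebra
  have e2: "(1-t)*a+t*b - b = - ((1-t)*(b-a))" by algebra
  show "dist (g a) (g ((1-t)*a+t*b)) = t*(b-a)"
    using d[OF A(1) s] e1 t ab by simp
  show "dist (g ((1-t)*a+t*b)) (g b) = (1-t)*(b-a)"
    using d[OF s A(2)] e2 t ab by simp
  show "dist (g a) (g b) = b - a" using d[OF A] ab by simp
qed

lemma geo_lemma:
  fixes x y z :: "'a::metric_space"
  assumes cat: "CAT0 TYPE('a)" and t: "t \<in> {0..1}"
  shows "(dist z (geo_comb t x y))\<^sup>2 \<le> (1-t)*(dist z x)\<^sup>2 + t*(dist z y)\<^sup>2 - t*(1-t)*(dist x y)\<^sup>2"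
proof -
  have gs: "geodesic_space TYPE('a)" using cat by (simp add: CAT0_def)
  have ineq: "\<And>(z::'a) g a b. geodesic g a b \<Longrightarrow>
        (dist z (g ((1 - t) * a + t * b)))\<^sup>2
          \<le> (1 - t) * (dist z (g a))\<^sup>2 + t * (dist z (g b))\<^sup>2
             - t * (1 - t) * (dist (g a) (g b))\<^sup>2"
    using cat t unfolding CAT0_def by blast
  obtain g a b where g: "geodesic g a b" "g a = x" "g b = y"
    using gs unfolding geodesic_space_def by blast
  have uniq: "q = g((1-t)*a+t*b)" if h: "geodesic h c e" "h c = x" "h e = y" "q = h((1-t)*c+t*e)" for h c e q
  proof -
    note f1 = geod_facts[OF g(1) t] and f2 = geod_facts[OF h(1) t]
    have L: "e - c = b - a" using f1(3) f2(3) g h by simp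
    have qx: "dist q x = t*(b-a)" using f2(1) h L by (simp add: dist_commute)
    have qy: "dist q y = (1-t)*(b-a)" using f2(2) h L by simp
    have I1: "(dist q (g ((1-t)*a+t*b)))\<^sup>2 \<le> (1 - t) * (dist q x)\<^sup>2 + t * (dist q y)\<^sup>2
             - t * (1 - t) * (dist x y)\<^sup>2" using ineq[OF g(1), of q] g by simp
    have xy: "dist x y = b - a" using f1(3) g by simp
    have "(1 - t) * (dist q x)\<^sup>2 + t * (dist q y)\<^sup>2 - t * (1 - t) * (dist x y)\<^sup>2 = 0"
      unfolding qx qy xy by (simp add: power2_eq_square algebra_simps)
    with I1 have "(dist q (g ((1-t)*a+t*b)))\<^sup>2 \<le> 0" by simp
    then show ?thesis by simp
  qed
  have "geo_comb t x y = g((1-t)*a+t*b)"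
    unfolding geo_comb_def
  proof (rule the_equality)
    show "\<exists>h c e. geodesic h c e \<and> h c = x \<and> h e = y \<and> g ((1 - t) * a + t * b) = h ((1 - t) * c + t * e)"
      using g by blast
  next
    fix p assume "\<exists>h c e. geodesic h c e \<and> h c = x \<and> h e = y \<and> p = h ((1 - t) * c + t * e)"
    then show "p = g ((1 - t) * a + t * b)" using uniq by blast
  qed
  then show ?thesis using ineq[OF g(1), of z] g by simp
qed

lemma lim_nonneg:
  fixes A B c :: real
  assumes c: "c > 0" and h: "\<And>t. 0 < t \<Longrightarrow> t \<le> c \<Longrightarrow> 0 \<le> t*A + B"
  shows "0 \<le> B"
proof (rule ccontr)
  assume "\<not> 0 \<le> B" hence B: "B < 0" by simp
  define t where "t = min c (-B/(\<bar>A\<bar>+1))"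
  have tp: "0 < t" using c B by (simp add: t_def divide_neg_pos)
  have tc: "t \<le> c" by (simp add: t_def)
  have t2: "t * (\<bar>A\<bar>+1) \<le> -B"
  proof -
    have "t \<le> -B/(\<bar>A\<bar>+1)" by (simp add: t_def)
    then show ?thesis by (simp add: field_simps)
  qed
  have "0 \<le> t*A + B" using h tp tc by simp
  moreover have "t*A \<le> t*\<bar>A\<bar>" using tp by (intro mult_left_mono) auto
  ultimately have "0 \<le> t*\<bar>A\<bar> + B" by linarith
  with t2 tp show False by (simp add: algebra_simps)
qed

theorem proposition3p9:
  fixes T :: "nat \<Rightarrow> 'a::metric_space \<Rightarrow> 'a" and gam :: "nat \<Rightarrow> real"
  assumes "CAT0 TYPE('a)"
    and "\<And>n. gam n > 0"
    and "jointly_firmly_nonexpansive T gam"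
  shows "jointly_P2 T gam"
  unfolding jointly_P2_def
proof (intro allI)
  fix n m x y
  define x' where "x' = T n x"
  define y' where "y' = T m y"
  define gn where "gn = gam n"
  define gm where "gm = gam m"
  have gn: "gn > 0" and gm: "gm > 0" using assms(2) by (auto simp: gn_def gm_def)
  define X where "X = (dist x y)\<^sup>2"
  define Y where "Y = (dist x y')\<^sup>2"
  define Z where "Z = (dist x' y)\<^sup>2"
  define W where "W = (dist x' y')\<^sup>2"
  define U where "U = (dist x x')\<^sup>2"
  define V where "V = (dist y y')\<^sup>2"
  define B where "B = (1/gn)*(Y - U - W) + (1/gm)*(Z - W - V)"
  define C where "C = (X - Y - Z + W)/(gn*gm) + V/gm^2 + U/gn^2"
  have key: "0 \<le> t*C + B" if t0: "0 < t" and tc: "t \<le> min gn gm" for t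
  proof -
    define a where "a = t/gn"
    define b where "b = t/gm"
    have a01: "a \<in> {0..1}" using t0 tc gn by (auto simp: a_def)
    have b01: "b \<in> {0..1}" using t0 tc gm by (auto simp: b_def)
    define p where "p = geo_comb (1-a) x x'"
    define q where "q = geo_comb (1-b) y y'"
    have "(1 - (1-a)) * gam n = (1 - (1-b)) * gam m" using gn gm
      by (simp add: a_def b_def gn_def gm_def)
    moreover have "1-a \<in> {0..1}" "1-b \<in> {0..1}" using a01 b01 by auto
    ultimately have F0: "dist x' y' \<le> dist p q"
      using assms(3) unfolding jointly_firmly_nonexpansive_def p_def q_def x'_def y'_def by blast
    have F: "W \<le> (dist q p)\<^sup>2" unfolding W_def using F0
      by (simp add: dist_commute power_mono)
    have G1: "(dist q p)\<^sup>2 \<le> a*(dist q x)\<^sup>2 + (1-a)*(dist q x')\<^sup>2 - (1-a)*a*U"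
      using geo_lemma[OF assms(1) \<open>1-a \<in> {0..1}\<close>, of q x x'] unfolding p_def U_def by simp
    have G2: "(dist q x)\<^sup>2 \<le> b*X + (1-b)*Y - (1-b)*b*V"
      using geo_lemma[OF assms(1) \<open>1-b \<in> {0..1}\<close>, of x y y'] unfolding q_def X_def Y_def V_def
      by (simp add: dist_commute)
    have G3: "(dist q x')\<^sup>2 \<le> b*Z + (1-b)*W - (1-b)*b*V"
      using geo_lemma[OF assms(1) \<open>1-b \<in> {0..1}\<close>, of x' y y'] unfolding q_def Z_def W_def V_def
      by (simp add: dist_commute)
    have H2: "a*(dist q x)\<^sup>2 \<le> a*(b*X + (1-b)*Y - (1-b)*b*V)"
      using G2 a01 by (intro mult_left_mono) auto
    have H3: "(1-a)*(dist q x')\<^sup>2 \<le> (1-a)*(b*Z + (1-b)*W - (1-b)*b*V)"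
      using G3 a01 by (intro mult_left_mono) auto
    have M: "0 \<le> a*(b*X + (1-b)*Y - (1-b)*b*V) + (1-a)*(b*Z + (1-b)*W - (1-b)*b*V) - (1-a)*a*U - W"
      using F G1 H2 H3 by linarith
    have E: "a*(b*X + (1-b)*Y - (1-b)*b*V) + (1-a)*(b*Z + (1-b)*W - (1-b)*b*V) - (1-a)*a*U - W
           = t*(t*C + B)"
      unfolding a_def b_def C_def B_def using gn gm
      by (simp add: field_simps power2_eq_square)
    show ?thesis using M E t0 by (simp add: zero_le_mult_iff)
  qed
  have "0 \<le> B" using gn gm key by (intro lim_nonneg[of "min gn gm" C B]) (auto simp: mult.commute)
  then show "1 / gam m * ((dist (T n x) (T m y))\<^sup>2 + (dist y (T m y))\<^sup>2 - (dist y (T n x))\<^sup>2)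
       \<le> 1 / gam n * ((dist x (T m y))\<^sup>2 - (dist x (T n x))\<^sup>2 - (dist (T n x) (T m y))\<^sup>2)"
    unfolding B_def X_def Y_def Z_def W_def U_def V_def x'_def y'_def gn_def gm_def
    by (simp add: dist_commute algebra_simps)
qed

end
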